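(* Let $\mathcal{C}$ be a covering of a finite set $E$ satisfying the condition (EQU): for every $K\in\mathcal{C}$ and all $x,y\in K$, the number of blocks of $\mathcal{C}$ containing $x$ equals the number of blocks of $\mathcal{C}$ containing $y$. Then $\{N(x):x\in E\}$ forms a partition of $E$, where $N(x)=\bigcap\{K\in\mathcal{C}:x\in K\}$.
   Context: A covering of $E$ is a family of nonempty subsets (blocks) of $E$ with union $E$. "$\{N(x):x\in E\}$ forms a partition" means the distinct sets among the $N(x)$ are pairwise disjoint (their union is $E$ since $x\in N(x)$). *)

theory Defs
  imports Main "HOL-Library.Disjoint_Sets"
begin

definition covering :: "'a set \<Rightarrow> 'a set set \<Rightarrow> bool" where
  "covering E C \<longleftrightarrow> (\<forall>K\<in>C. K \<noteq> {} \<and> K \<subseteq> E) \<and> \<Union>C = E"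

definition deg :: "'a set set \<Rightarrow> 'a \<Rightarrow> nat" where
  "deg C x = card {K \<in> C. x \<in> K}"

definition EQU :: "'a set set \<Rightarrow> bool" where
  "EQU C \<longleftrightarrow> (\<forall>K\<in>C. \<forall>x\<in>K. \<forall>y\<in>K. deg C x = deg C y)"

definition Nb :: "'a set set \<Rightarrow> 'a \<Rightarrow> 'a set" where
  "Nb C x = \<Inter>{K \<in> C. x \<in> K}"

end

theory Submission
  imports Defs
begin

theorem proposition21:
  fixes E :: "'a set" and C :: "'a set set"
  assumes "finite E" and "covering E C" and "EQU C"
  shows "partition_on E (Nb C ` E)"
proof -
  have cov: "\<And>K. K \<in> C \<Longrightarrow> K \<noteq> {} \<and> K \<subseteq> E" "\<Union>C = E"
    using assms(2) by (auto simp: covering_def)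
  have finC: "finite C"
    proof (rule finite_subset)
    show "C \<subseteq> Pow E" using cov(1) by blast
    show "finite (Pow E)" using assms(1) by simp
  qed
  define S where "S x = {K \<in> C. x \<in> K}" for x
  have finS: "finite (S x)" for x using finC by (simp add: S_def)
  have memN: "z \<in> Nb C x \<longleftrightarrow> S x \<subseteq> S z" for x z
    by (auto simp: Nb_def S_def)
  have NS: "Nb C x = \<Inter>(S x)" for x by (simp add: Nb_def S_def)
  have key: "S x = S z" if hx: "x \<in> E" and hz: "z \<in> Nb C x" for x z
  proof -
    obtain K where K: "K \<in> C" "x \<in> K" using hx cov(2) by blast
    have sub: "S x \<subseteq> S z" using hz memN by simp
    then have "z \<in> K" using K by (auto simp: S_def)
    then have "deg C x = deg C z" using assms(3) K unfolding EQU_def by blast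
    then have "card (S x) = card (S z)" by (simp add: deg_def S_def)
    then show ?thesis using sub finS card_subset_eq by blast
  qed
  have xN: "x \<in> Nb C x" for x by (simp add: memN)
  have NE: "Nb C x \<subseteq> E" if hx: "x \<in> E" for x
  proof -
    obtain K where K: "K \<in> C" "x \<in> K" using hx cov(2) by blast
    then have "Nb C x \<subseteq> K" by (auto simp: Nb_def)
    then show ?thesis using cov(1)[OF K(1)] by blast
  qed
  show ?thesis unfolding partition_on_def
  proof (intro conjI)
    show "\<Union> (Nb C ` E) = E"
    proof
      show "\<Union> (Nb C ` E) \<subseteq> E" using NE by blast
      show "E \<subseteq> \<Union> (Nb C ` E)" using xN by blast
    qed
    show "{} \<notin> Nb C ` E" using xN by (metis empty_iff imageE)
    show "disjoint (Nb C ` E)"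
    proof (rule disjointI)
      fix A B assume "A \<in> Nb C ` E" "B \<in> Nb C ` E" "A \<noteq> B"
      then obtain x y where xy: "x \<in> E" "y \<in> E" "A = Nb C x" "B = Nb C y" by blast
      show "A \<inter> B = {}"
      proof (rule ccontr)
        assume "A \<inter> B \<noteq> {}"
        then obtain z where "z \<in> Nb C x" "z \<in> Nb C y" using xy by blast
        then have "S x = S y" using key[OF xy(1)] key[OF xy(2)] by simp
        then show False using \<open>A \<noteq> B\<close> xy NS by simp
      qed
    qed
  qed
qed

end
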